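(* Let $G$ be a finite abelian group, let $I,\Lambda$ be non-empty sets, and let $P=(p_{\lambda i})$ be a $\Lambda\times I$ matrix with entries in $G\cup\{\mathbf{0}\}$. Let $A$ be a finite alphabet and let $L\subseteq A^{+}$ be a language recognised by the Rees zero-matrix semigroup $M^{0}[G;I,\Lambda;P]$. Then $L$ has generalised star-height at most $1$. The same conclusion holds for languages recognised by the Rees matrix semigroup $M[G;I,\Lambda;P]$ (where all entries of $P$ lie in $G$).
   Context: For a semigroup $S$ without zero, non-empty sets $I,\Lambda$ and a $\Lambda\times I$ matrix $P=(p_{\lambda i})$ with entries in $S\cup\{\mathbf{0}\}$ ($\mathbf{0}$ a new symbol), the Rees zero-matrix semigroup $M^{0}[S;I,\Lambda;P]$ is the set $(I\times S\times\Lambda)\cup\{\mathbf{0}\}$ with multiplication $(i,s,\lambda)(j,t,\mu)=(i,s\,p_{\lambda j}\,t,\mu)$ if $p_{\lambda j}\neq\mathbf{0}$, $(i,s,\lambda)(j,t,\mu)=\mathbf{0}$ if $p_{\lambda j}=\mathbf{0}$, and $x\mathbf{0}=\mathbf{0}x=\mathbf{0}$ for all $x$. If all entries of $P$ lie in $S$, then $I\times S\times\Lambda$ with the same multiplication is the Rees matrix semigroup $M[S;I,\Lambda;P]$. A language $L\subseteq A^{+}$ is recognised by a semigroup $T$ if there is a semigroup morphism $\psi:A^{+}\to T$ and a subset $X\subseteq T$ with $L=X\psi^{-1}$. Generalised regular expressions over $A$: $\emptyset$, $\varepsilon$ and each letter $a\in A$ are expressions; if $E,F$ are expressions then so are $E\cup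 F$, $EF$, $E^{\ast}$ and $E^{c}$ (complement in $A^{\ast}$). The star-height $h$ of an expression: $h(\emptyset)=h(\varepsilon)=h(a)=0$, $h(E\cup F)=h(EF)=\max\{h(E),h(F)\}$, $h(E^{\ast})=h(E)+1$, $h(E^{c})=h(E)$. The (generalised) star-height of a language is the minimum of $h(E)$ over all expressions $E$ representing it. *)

theory Defs
  imports "HOL-Algebra.Group"
begin

definition conc :: "'a list set \<Rightarrow> 'a list set \<Rightarrow> 'a list set" where
  "conc K L = {u @ v | u v. u \<in> K \<and> v \<in> L}"

definition kstar :: "'a list set \<Rightarrow> 'a list set" where
  "kstar L = (\<Union>n. ((conc L) ^^ n) {[]})"

datatype 'a gre =
    Empty
  | Eps
  | Letter 'a
  | Union "'a gre" "'a gre"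
  | Concat "'a gre" "'a gre"
  | Star "'a gre"
  | Compl "'a gre"

fun letters :: "'a gre \<Rightarrow> 'a set" where
  "letters Empty = {}"
| "letters Eps = {}"
| "letters (Letter a) = {a}"
| "letters (Union E F) = letters E \<union> letters F"
| "letters (Concat E F) = letters E \<union> letters F"
| "letters (Star E) = letters E"
| "letters (Compl E) = letters E"

fun lang :: "'a set \<Rightarrow> 'a gre \<Rightarrow> 'a list set" where
  "lang A Empty = {}"
| "lang A Eps = {[]}"
| "lang A (Letter a) = {[a]}"
| "lang A (Union E F) = lang A E \<union> lang A F"
| "lang A (Concat E F) = conc (lang A E) (lang A F)"
| "lang A (Star E) = kstar (lang A E)"
| "lang A (Compl E) = lists A - lang A E"

fun star_height :: "'a gre \<Rightarrow> nat" where
  "star_height Empty = 0"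
| "star_height Eps = 0"
| "star_height (Letter a) = 0"
| "star_height (Union E F) = max (star_height E) (star_height F)"
| "star_height (Concat E F) = max (star_height E) (star_height F)"
| "star_height (Star E) = star_height E + 1"
| "star_height (Compl E) = star_height E"

definition gen_star_height_le :: "'a set \<Rightarrow> 'a list set \<Rightarrow> nat \<Rightarrow> bool" where
  "gen_star_height_le A L h \<longleftrightarrow>
     (\<exists>E. letters E \<subseteq> A \<and> lang A E = L \<and> star_height E \<le> h)"

definition recognises ::
  "'t set \<Rightarrow> ('t \<Rightarrow> 't \<Rightarrow> 't) \<Rightarrow> 'a set \<Rightarrow> 'a list set \<Rightarrow> bool" where
  "recognises T mul A L \<longleftrightarrow>
     (\<exists>psi X.
        (\<forall>w. w \<in> lists A \<and> w \<noteq> [] \<longrightarrow> psi w \<in> T) \<and>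
        (\<forall>u v. u \<in> lists A \<and> u \<noteq> [] \<and> v \<in> lists A \<and> v \<noteq> [] \<longrightarrow>
               psi (u @ v) = mul (psi u) (psi v)) \<and>
        X \<subseteq> T \<and>
        L = {w \<in> lists A. w \<noteq> [] \<and> psi w \<in> X})"

text \<open>Rees zero-matrix semigroup M0[G;I,Lambda;P]: None is the zero;
  P l i = None means the matrix entry is the zero symbol.\<close>
definition rees0_carrier ::
  "('g, 'b) monoid_scheme \<Rightarrow> 'i set \<Rightarrow> 'l set \<Rightarrow> ('i \<times> 'g \<times> 'l) option set" where
  "rees0_carrier G I Lam = insert None (Some ` (I \<times> carrier G \<times> Lam))"

definition rees0_mult ::
  "('g, 'b) monoid_scheme \<Rightarrow> ('l \<Rightarrow> 'i \<Rightarrow> 'g option) \<Rightarrow>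
   ('i \<times> 'g \<times> 'l) option \<Rightarrow> ('i \<times> 'g \<times> 'l) option \<Rightarrow> ('i \<times> 'g \<times> 'l) option" where
  "rees0_mult G P x y =
     (case x of None \<Rightarrow> None
      | Some (i, s, l) \<Rightarrow>
        (case y of None \<Rightarrow> None
         | Some (j, t, m) \<Rightarrow>
           (case P l j of None \<Rightarrow> None
            | Some p \<Rightarrow> Some (i, s \<otimes>\<^bsub>G\<^esub> p \<otimes>\<^bsub>G\<^esub> t, m))))"

definition rees_carrier ::
  "('g, 'b) monoid_scheme \<Rightarrow> 'i set \<Rightarrow> 'l set \<Rightarrow> ('i \<times> 'g \<times> 'l) set" where
  "rees_carrier G I Lam = I \<times> carrier G \<times> Lam"

definition rees_mult ::
  "('g, 'b) monoid_scheme \<Rightarrow> ('l \<Rightarrow> 'i \<Rightarrow> 'g) \<Rightarrow>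
   ('i \<times> 'g \<times> 'l) \<Rightarrow> ('i \<times> 'g \<times> 'l) \<Rightarrow> ('i \<times> 'g \<times> 'l)" where
  "rees_mult G P x y =
     (case x of (i, s, l) \<Rightarrow> (case y of (j, t, m) \<Rightarrow> (i, s \<otimes>\<^bsub>G\<^esub> P l j \<otimes>\<^bsub>G\<^esub> t, m)))"

end

theory Submission
  imports Defs "HOL-Algebra.Multiplicative_Group"
begin


abbreviation gsh where "gsh A h L \<equiv> gen_star_height_le A L h"

lemma conc_sub: "K \<subseteq> lists A \<Longrightarrow> L \<subseteq> lists A \<Longrightarrow> conc K L \<subseteq> lists A"
  unfolding conc_def by (auto dest!: subsetD)

lemma kstar_sub: assumes "L \<subseteq> lists A" shows "kstar L \<subseteq> lists A"
proof -
  have "((conc L) ^^ n) {[]} \<subseteq> lists A" for n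
  proof (induction n)
    case (Suc n) thus ?case using conc_sub[OF assms Suc] by simp
  qed simp
  thus ?thesis by (auto simp: kstar_def)
qed

lemma lang_sub: "letters E \<subseteq> A \<Longrightarrow> lang A E \<subseteq> lists A"
proof (induction E)
  case (Concat E1 E2) thus ?case using conc_sub[of "lang A E1" A "lang A E2"] by simp
next
  case (Star E) thus ?case using kstar_sub[of "lang A E" A] by simp
qed auto

lemma gsh_sub: "gsh A h L \<Longrightarrow> L \<subseteq> lists A"
  unfolding gen_star_height_le_def using lang_sub by blast

lemma gsh_empty: "gsh A h {}"
  unfolding gen_star_height_le_def by (rule exI[of _ Empty]) auto

lemma gsh_eps: "gsh A h {[]}"
  unfolding gen_star_height_le_def by (rule exI[of _ Eps]) auto

lemma gsh_letter: "a \<in> A \<Longrightarrow> gsh A h {[a]}"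
  unfolding gen_star_height_le_def by (rule exI[of _ "Letter a"]) auto

lemma gsh_union: "gsh A h K \<Longrightarrow> gsh A h L \<Longrightarrow> gsh A h (K \<union> L)"
  unfolding gen_star_height_le_def
  by (metis lang.simps(4) letters.simps(4) max.bounded_iff sup.bounded_iff star_height.simps(4))

lemma gsh_conc: "gsh A h K \<Longrightarrow> gsh A h L \<Longrightarrow> gsh A h (conc K L)"
  unfolding gen_star_height_le_def
  by (metis lang.simps(5) letters.simps(5) max.bounded_iff sup.bounded_iff star_height.simps(5))

lemma gsh_compl: "gsh A h K \<Longrightarrow> gsh A h (lists A - K)"
  unfolding gen_star_height_le_def
  by (metis lang.simps(7) letters.simps(7) star_height.simps(7))

lemma gsh_star: "gsh A h K \<Longrightarrow> gsh A (Suc h) (kstar K)"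
  unfolding gen_star_height_le_def
  by (metis Suc_eq_plus1 Suc_le_mono lang.simps(6) letters.simps(6) star_height.simps(6))

lemma gsh_mono: "gsh A h K \<Longrightarrow> h \<le> h' \<Longrightarrow> gsh A h' K"
  unfolding gen_star_height_le_def using order_trans by blast

lemma gsh_lists: "gsh A h (lists A)"
  using gsh_compl[OF gsh_empty] by simp

lemma gsh_int: assumes "gsh A h K" "gsh A h L" shows "gsh A h (K \<inter> L)"
proof -
  have "K \<inter> L = lists A - ((lists A - K) \<union> (lists A - L))"
    using gsh_sub[OF assms(1)] gsh_sub[OF assms(2)] by blast
  thus ?thesis using assms by (simp add: gsh_compl gsh_union)
qed

lemma gsh_Union: "finite S \<Longrightarrow> (\<And>s. s \<in> S \<Longrightarrow> gsh A h (F s)) \<Longrightarrow> gsh A h (\<Union>s\<in>S. F s)"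
  by (induction S rule: finite_induct) (auto intro: gsh_empty gsh_union)

lemma gsh_Inter: "finite S \<Longrightarrow> (\<And>s. s \<in> S \<Longrightarrow> gsh A h (F s)) \<Longrightarrow> gsh A h (lists A \<inter> (\<Inter>s\<in>S. F s))"
proof (induction S rule: finite_induct)
  case empty thus ?case by (simp add: gsh_lists)
next
  case (insert x F')
  have "lists A \<inter> (\<Inter>s\<in>insert x F'. F s) = F x \<inter> (lists A \<inter> (\<Inter>s\<in>F'. F s))" by auto
  thus ?case using insert by (simp add: gsh_int)
qed

lemma gsh_funpow: "gsh A h X \<Longrightarrow> gsh A h Y \<Longrightarrow> gsh A h (((conc X)^^n) Y)"
  by (induction n) (auto intro: gsh_conc)


fun cnt :: "'a \<Rightarrow> 'a \<Rightarrow> 'a list \<Rightarrow> nat" where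
  "cnt c d (x # y # r) = (if x = c \<and> y = d then 1 else 0) + cnt c d (y # r)"
| "cnt c d _ = 0"

lemma cnt_append: "u \<noteq> [] \<Longrightarrow> cnt c d (u @ v) = cnt c d u + cnt c d (last u # v)"
proof (induction u)
  case Nil then show ?case by simp
next
  case (Cons x u) show ?case
  proof (cases u)
    case Nil then show ?thesis by simp
  next
    case (Cons y r) then show ?thesis using Cons.IH by simp
  qed
qed

lemma cnt_pos: "0 < cnt c d w \<longleftrightarrow> (\<exists>x y. w = x @ [c,d] @ y)"
proof (induction c d w rule: cnt.induct)
  case (1 c d x y r)
  show ?case
  proof
    assume "0 < cnt c d (x#y#r)"
    then consider "x = c \<and> y = d" | "0 < cnt c d (y#r)" by (auto split: if_splits)
    then show "\<exists>u v. x#y#r = u @ [c,d] @ v"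
    proof cases
      case 1 then show ?thesis by (intro exI[of _ "[]"] exI[of _ r]) simp
    next
      case 2 then obtain u v where "y#r = u @ [c,d] @ v" using "1.IH" by blast
      then show ?thesis by (intro exI[of _ "x#u"] exI[of _ v]) simp
    qed
  next
    assume "\<exists>u v. x#y#r = u@[c,d]@v"
    then obtain u v where e: "x#y#r = u@[c,d]@v" by blast
    show "0 < cnt c d (x#y#r)"
    proof (cases u)
      case Nil then show ?thesis using e by simp
    next
      case (Cons z u')
      then have "y#r = u'@[c,d]@v" using e by simp
      then have "0 < cnt c d (y#r)" using "1.IH" by blast
      then show ?thesis by simp
    qed
  qed
qed (auto simp: Cons_eq_append_conv)

lemma mem_cnt: "a \<in> set w \<Longrightarrow> a = hd w \<or> (\<exists>x. 0 < cnt x a w)"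
proof (induction w rule: induct_list012)
  case (3 x y r)
  show ?case
  proof (cases "a = x")
    case False
    then have "a \<in> set (y#r)" using 3 by simp
    then have "a = y \<or> (\<exists>z. 0 < cnt z a (y#r))" using 3 by simp
    then show ?thesis
    proof
      assume "a = y" then have "0 < cnt x a (x#y#r)" by simp
      then show ?thesis by blast
    next
      assume "\<exists>z. 0 < cnt z a (y#r)"
      then obtain z where "0 < cnt z a (y#r)" by blast
      then have "0 < cnt z a (x#y#r)" by simp
      then show ?thesis by blast
    qed
  qed simp
qed auto

lemma cnt_pos_set: "0 < cnt c d w \<Longrightarrow> c \<in> set w \<and> d \<in> set w"
  by (auto simp: cnt_pos)

lemma cnt_decomp: "0 < cnt c d (e # v) \<Longrightarrow> \<exists>x v'. v = x @ d # v' \<and> cnt c d (e#x) = 0 \<and> last (e#x) = c"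
proof (induction v rule: rev_induct)
  case Nil thus ?case by simp
next
  case (snoc y v)
  have eq: "cnt c d (e # v @ [y]) = cnt c d (e#v) + cnt c d [last (e#v), y]"
    using cnt_append[of "e#v" c d "[y]"] by simp
  show ?case
  proof (cases "0 < cnt c d (e#v)")
    case True then obtain x v' where "v = x @ d # v'" "cnt c d (e#x) = 0" "last(e#x) = c"
      using snoc.IH by blast
    then show ?thesis by (intro exI[of _ x] exI[of _ "v'@[y]"]) simp
  next
    case False
    with snoc.prems eq have "last (e#v) = c" "y = d" by (auto split: if_splits)
    with False show ?thesis by (intro exI[of _ v] exI[of _ "[]"]) simp
  qed
qed

lemma cnt_split: "cnt c d (e # x @ d # v') = cnt c d (e#x) + (if last (e#x) = c then 1 else 0) + cnt c d (d # v')"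
  using cnt_append[of "e#x" c d "d#v'"] by simp

definition T0 where "T0 A c d e = {v \<in> lists A. cnt c d (e#v) = 0}"
definition Pe where "Pe A c d e = {x @ [d] | x. x \<in> lists A \<and> cnt c d (e#x) = 0 \<and> last (e#x) = c}"
definition Zm where "Zm A c d N e r = {v \<in> lists A. cnt c d (e#v) mod N = r}"
definition pw where "pw X n = ((conc X)^^n) {[]}"

lemma ex_split_Cons: "(\<exists>x y. e#v = x@[c,d]@y) \<longleftrightarrow> (\<exists>x y. v = x@[c,d]@y) \<or> (e = c \<and> (\<exists>y. v = d#y))"
  by (auto simp: Cons_eq_append_conv)

lemma T0_expr: "T0 A c d e = lists A - (conc (lists A) (conc {[c,d]} (lists A)) \<union> (if e = c then conc {[d]} (lists A) else {}))"
proof -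
  have 1: "v \<in> conc (lists A) (conc {[c,d]} (lists A)) \<longleftrightarrow> (\<exists>x y. v = x@[c,d]@y)" if "v \<in> lists A" for v
    using that unfolding conc_def by (auto, fastforce)
  have 2: "v \<in> conc {[d]} (lists A) \<longleftrightarrow> (\<exists>y. v = d#y)" if "v \<in> lists A" for v
    using that by (auto simp: conc_def)
  show ?thesis
  proof (rule Set.set_eqI)
    fix v
    show "v \<in> T0 A c d e \<longleftrightarrow> v \<in> lists A - (conc (lists A) (conc {[c,d]} (lists A)) \<union> (if e = c then conc {[d]} (lists A) else {}))"
    proof (cases "v \<in> lists A")
      case True
      have "v \<in> T0 A c d e \<longleftrightarrow> \<not> (0 < cnt c d (e#v))" using True by (simp add: T0_def)
      also have "\<dots> \<longleftrightarrow> \<not>((\<exists>x y. v = x@[c,d]@y) \<or> (e = c \<and> (\<exists>y. v = d#y)))"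
        unfolding cnt_pos ex_split_Cons ..
      also have "\<dots> \<longleftrightarrow> v \<in> lists A - (conc (lists A) (conc {[c,d]} (lists A)) \<union> (if e = c then conc {[d]} (lists A) else {}))"
        using True 1[OF True] 2[OF True] by auto
      finally show ?thesis .
    qed (simp add: T0_def)
  qed
qed

lemma gsh_cd: "c \<in> A \<Longrightarrow> d \<in> A \<Longrightarrow> gsh A h {[c,d]}"
proof -
  assume "c \<in> A" "d \<in> A"
  have "{[c,d]} = conc {[c]} {[d]}" by (auto simp: conc_def)
  thus ?thesis using \<open>c \<in> A\<close> \<open>d \<in> A\<close> by (simp add: gsh_conc gsh_letter)
qed

lemma gsh_T0: "c \<in> A \<Longrightarrow> d \<in> A \<Longrightarrow> gsh A h (T0 A c d e)"
  unfolding T0_expr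
  by (intro gsh_compl gsh_union gsh_conc gsh_lists gsh_cd) (auto intro: gsh_conc gsh_letter gsh_lists gsh_empty)

lemma Pe_expr: "Pe A c d e = conc (T0 A c d e \<inter> ((if e = c then {[]} else {}) \<union> conc (lists A) {[c]})) {[d]}"
proof -
  have "last (e#x) = c \<longleftrightarrow> (x = [] \<and> e = c) \<or> (\<exists>x'. x = x'@[c])" for x
    by (cases x rule: rev_cases) auto
  thus ?thesis unfolding Pe_def T0_def conc_def by auto
qed

lemma gsh_Pe: "c \<in> A \<Longrightarrow> d \<in> A \<Longrightarrow> gsh A h (Pe A c d e)"
  unfolding Pe_expr
  by (intro gsh_conc gsh_int gsh_T0 gsh_union gsh_letter gsh_lists) (auto intro: gsh_eps gsh_empty)

lemma cnt_Suc_set: assumes "d \<in> A"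
  shows "{v \<in> lists A. cnt c d (e#v) = Suc k} = conc (Pe A c d e) {v \<in> lists A. cnt c d (d#v) = k}"
proof (rule Set.set_eqI, rule iffI)
  fix v assume "v \<in> {v \<in> lists A. cnt c d (e#v) = Suc k}"
  then have v: "v \<in> lists A" "cnt c d (e#v) = Suc k" by auto
  then obtain x v' where xv: "v = x @ d # v'" "cnt c d (e#x) = 0" "last (e#x) = c"
    using cnt_decomp[of c d e v] by auto
  have "cnt c d (d#v') = k" using v(2) xv cnt_split[of c d e x v'] by simp
  moreover have "x @ [d] \<in> Pe A c d e" unfolding Pe_def using xv v(1) by auto
  moreover have "v' \<in> lists A" using xv v(1) by simp
  ultimately show "v \<in> conc (Pe A c d e) {v \<in> lists A. cnt c d (d#v) = k}"
    unfolding conc_def using xv(1) by (intro CollectI exI[of _ "x@[d]"] exI[of _ v']) simp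
next
  fix v assume "v \<in> conc (Pe A c d e) {v \<in> lists A. cnt c d (d#v) = k}"
  then obtain u v' where uv: "v = u @ v'" "u \<in> Pe A c d e" "v' \<in> lists A" "cnt c d (d#v') = k"
    unfolding conc_def by blast
  then obtain x where x: "u = x @ [d]" "x \<in> lists A" "cnt c d (e#x) = 0" "last (e#x) = c"
    unfolding Pe_def by blast
  have xv: "v = x @ d # v'" "cnt c d (e#x) = 0" "last (e#x) = c"
    "x \<in> lists A" "v' \<in> lists A" "cnt c d (d#v') = k" using uv x by auto
  have "v \<in> lists A" using xv assms by simp
  moreover have "cnt c d (e#v) = Suc k" using xv cnt_split[of c d e x v'] by simp
  ultimately show "v \<in> {v \<in> lists A. cnt c d (e#v) = Suc k}" by simp
qed

lemma conc_assoc: "conc (conc X Y) Z = conc X (conc Y Z)"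
  unfolding conc_def by (auto, metis append_assoc, metis append_assoc)

lemma conc_eps: "conc {[]} Y = Y"
  unfolding conc_def by auto

lemma pw_Suc: "pw X (Suc n) = conc X (pw X n)"
  by (simp add: pw_def)

lemma funpow_conc: "((conc X)^^n) Y = conc (pw X n) Y"
proof (induction n)
  case 0 thus ?case by (simp add: pw_def conc_eps)
next
  case (Suc n) thus ?case by (simp add: pw_Suc conc_assoc)
qed

lemma pw_add: "pw X (m+n) = conc (pw X m) (pw X n)"
proof (induction m)
  case 0 thus ?case by (simp add: pw_def conc_eps)
next
  case (Suc m) thus ?case by (simp add: pw_Suc conc_assoc)
qed

lemma pw_mult: "pw (pw X N) j = pw X (N*j)"
proof (induction j)
  case 0 thus ?case by (simp add: pw_def)
next
  case (Suc j) thus ?case by (simp add: pw_Suc pw_add[symmetric])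
qed

lemma kstar_pw: "kstar Y = (\<Union>j. pw Y j)"
  by (simp add: kstar_def pw_def)

lemma conc_UN: "conc (\<Union>j. F j) Y = (\<Union>j. conc (F j) Y)"
  unfolding conc_def by auto

lemma Td_pw: assumes "d \<in> A"
  shows "{v \<in> lists A. cnt c d (d#v) = k} = conc (pw (Pe A c d d) k) (T0 A c d d)"
proof (induction k)
  case 0 thus ?case by (simp add: pw_def conc_eps T0_def)
next
  case (Suc k) thus ?case by (simp add: cnt_Suc_set[OF assms] pw_Suc conc_assoc)
qed

lemma Zd_expr: assumes "d \<in> A" "r < N"
  shows "Zm A c d N d r = conc (kstar (pw (Pe A c d d) N)) (conc (pw (Pe A c d d) r) (T0 A c d d))"
proof -
  let ?P = "Pe A c d d"
  have "Zm A c d N d r = (\<Union>j. {v \<in> lists A. cnt c d (d#v) = N*j + r})"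
  proof (rule Set.set_eqI, rule iffI)
    fix v assume "v \<in> Zm A c d N d r"
    then have "v \<in> lists A" "cnt c d (d#v) mod N = r" unfolding Zm_def by auto
    moreover have "cnt c d (d#v) = N * (cnt c d (d#v) div N) + cnt c d (d#v) mod N"
      by (metis mult_div_mod_eq)
    ultimately have "v \<in> lists A" "cnt c d (d#v) = N * (cnt c d (d#v) div N) + r" by auto
    then show "v \<in> (\<Union>j. {v \<in> lists A. cnt c d (d#v) = N*j + r})" by blast
  next
    fix v assume "v \<in> (\<Union>j. {v \<in> lists A. cnt c d (d#v) = N*j + r})"
    then obtain j where "v \<in> lists A" "cnt c d (d#v) = N*j + r" by blast
    then show "v \<in> Zm A c d N d r" unfolding Zm_def using assms(2) by simp
  qed
  also have "\<dots> = (\<Union>j. conc (pw ?P (N*j)) (conc (pw ?P r) (T0 A c d d)))"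
    by (simp add: Td_pw[OF assms(1)] pw_add conc_assoc)
  also have "\<dots> = conc (kstar (pw ?P N)) (conc (pw ?P r) (T0 A c d d))"
    by (simp add: kstar_pw conc_UN pw_mult)
  finally show ?thesis .
qed

lemma gsh_pw: "gsh A h X \<Longrightarrow> gsh A h (pw X n)"
  unfolding pw_def by (intro gsh_funpow gsh_eps)

lemma gsh_Zd: "c \<in> A \<Longrightarrow> d \<in> A \<Longrightarrow> r < N \<Longrightarrow> gsh A 1 (Zm A c d N d r)"
  unfolding Zd_expr
  by (intro gsh_conc gsh_pw gsh_Pe gsh_T0 gsh_mono[OF gsh_star[OF gsh_pw[OF gsh_Pe]]]) auto

lemma sucmod: assumes "0 < (N::nat)" "r < N"
  shows "Suc k mod N = r \<longleftrightarrow> k mod N = (r + N - 1) mod N"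
proof
  assume h: "Suc k mod N = r"
  have "(r + N - 1) mod N = (Suc k mod N + (N - 1)) mod N" using h assms by simp
  also have "\<dots> = (Suc k + (N - 1)) mod N" by (simp add: mod_add_left_eq)
  also have "Suc k + (N - 1) = k + N" using assms by simp
  finally show "k mod N = (r + N - 1) mod N" by simp
next
  assume h: "k mod N = (r + N - 1) mod N"
  have "Suc k mod N = Suc (k mod N) mod N" by (simp add: mod_Suc_eq)
  also have "\<dots> = Suc ((r + N - 1) mod N) mod N" using h by simp
  also have "\<dots> = Suc (r + N - 1) mod N" by (simp add: mod_Suc_eq)
  also have "Suc (r + N - 1) = r + N" using assms by simp
  finally show "Suc k mod N = r" using assms by simp
qed

lemma Zm_step: assumes "d \<in> A" "0 < N" "r < N"
  shows "Zm A c d N e r = (if r = 0 then T0 A c d e else {}) \<union> conc (Pe A c d e) (Zm A c d N d ((r + N - 1) mod N))"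
proof -
  have "Zm A c d N e r = {v \<in> lists A. cnt c d (e#v) = 0 \<and> r = 0} \<union>
     (\<Union>k. {v \<in> lists A. cnt c d (e#v) = Suc k \<and> Suc k mod N = r})"
  proof (rule Set.set_eqI)
    fix v show "v \<in> Zm A c d N e r \<longleftrightarrow> v \<in> {v \<in> lists A. cnt c d (e#v) = 0 \<and> r = 0} \<union>
     (\<Union>k. {v \<in> lists A. cnt c d (e#v) = Suc k \<and> Suc k mod N = r})"
      unfolding Zm_def by (cases "cnt c d (e#v)") simp_all
  qed
  also have "\<dots> = (if r = 0 then T0 A c d e else {}) \<union>
     (\<Union>k. {v \<in> lists A. cnt c d (e#v) = Suc k \<and> k mod N = (r + N - 1) mod N})"
  proof -
    have "Suc k mod N = r \<longleftrightarrow> k mod N = (r + N - 1) mod N" for k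
      using sucmod[OF assms(2,3)] .
    thus ?thesis unfolding T0_def by auto
  qed
  also have "(\<Union>k. {v \<in> lists A. cnt c d (e#v) = Suc k \<and> k mod N = (r + N - 1) mod N})
     = (\<Union>k\<in>{k. k mod N = (r + N - 1) mod N}. {v \<in> lists A. cnt c d (e#v) = Suc k})" by auto
  also have "\<dots> = (\<Union>k\<in>{k. k mod N = (r + N - 1) mod N}. conc (Pe A c d e) {v \<in> lists A. cnt c d (d#v) = k})"
    by (simp add: cnt_Suc_set[OF assms(1)])
  also have "\<dots> = conc (Pe A c d e) (Zm A c d N d ((r + N - 1) mod N))"
    unfolding Zm_def conc_def by auto
  finally show ?thesis .
qed

lemma gsh_Zm: assumes "c \<in> A" "d \<in> A" "0 < N" "r < N" shows "gsh A 1 (Zm A c d N e r)"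
proof -
  have "gsh A 1 (Zm A c d N d ((r + N - 1) mod N))" by (rule gsh_Zd) (use assms in auto)
  moreover have "gsh A 1 (T0 A c d e)" "gsh A 1 (Pe A c d e)"
    using assms by (auto intro: gsh_T0 gsh_Pe)
  ultimately show ?thesis
    by (subst Zm_step[OF assms(2,3,4)]) (auto intro!: gsh_union gsh_conc gsh_empty)
qed



lemma C_expr: "{w \<in> lists A. cnt c d w mod N = r} = (if r = 0 then {[]} else {}) \<union> (\<Union>e\<in>A. conc {[e]} (Zm A c d N e r))"
proof (rule Set.set_eqI)
  fix w show "w \<in> {w \<in> lists A. cnt c d w mod N = r} \<longleftrightarrow> w \<in> (if r = 0 then {[]} else {}) \<union> (\<Union>e\<in>A. conc {[e]} (Zm A c d N e r))"
    by (cases w) (auto simp: conc_def Zm_def)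
qed

lemma gsh_C: assumes "c \<in> A" "d \<in> A" "finite A" "0 < N" "r < N"
  shows "gsh A 1 {w \<in> lists A. cnt c d w mod N = r}"
proof -
  have Z: "gsh A 1 (Zm A c d N e r)" for e using assms by (intro gsh_Zm)
  have U: "gsh A 1 (\<Union>e\<in>A. conc {[e]} (Zm A c d N e r))"
  proof (rule gsh_Union[OF assms(3)])
    fix e assume "e \<in> A"
    then show "gsh A 1 (conc {[e]} (Zm A c d N e r))" using Z by (intro gsh_conc gsh_letter)
  qed
  have E: "gsh A 1 (if r = 0 then {[]} else {})" by (simp add: gsh_eps gsh_empty)
  show ?thesis unfolding C_expr by (rule gsh_union[OF E U])
qed

lemma Pos_expr: assumes "c \<in> A" "d \<in> A" shows "{w \<in> lists A. 0 < cnt c d w} = conc (lists A) (conc {[c,d]} (lists A))"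
proof (rule Set.set_eqI)
  fix v
  show "v \<in> {w \<in> lists A. 0 < cnt c d w} \<longleftrightarrow> v \<in> conc (lists A) (conc {[c,d]} (lists A))"
  proof (cases "v \<in> lists A")
    case True
    have 1: "v \<in> conc (lists A) (conc {[c,d]} (lists A)) \<longleftrightarrow> (\<exists>x y. v = x@[c,d]@y)"
      using True unfolding conc_def by (auto, fastforce)
    show ?thesis using True unfolding 1 cnt_pos by simp
  next
    case False
    have "{[c,d]} \<subseteq> lists A" using assms by auto
    then have "conc (lists A) (conc {[c,d]} (lists A)) \<subseteq> lists A"
      by (intro conc_sub) auto
    then show ?thesis using False by auto
  qed
qed

lemma gsh_Pos: "c \<in> A \<Longrightarrow> d \<in> A \<Longrightarrow> gsh A h {w \<in> lists A. 0 < cnt c d w}"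
  by (subst Pos_expr) (auto intro!: gsh_conc gsh_lists gsh_cd)

lemma Hd_expr: "{w \<in> lists A. w \<noteq> [] \<and> hd w = a} = (if a \<in> A then conc {[a]} (lists A) else {})"
proof (rule Set.set_eqI)
  fix w show "w \<in> {w \<in> lists A. w \<noteq> [] \<and> hd w = a} \<longleftrightarrow> w \<in> (if a \<in> A then conc {[a]} (lists A) else {})"
    by (cases w) (auto simp: conc_def)
qed

lemma Last_expr: "{w \<in> lists A. w \<noteq> [] \<and> last w = a} = (if a \<in> A then conc (lists A) {[a]} else {})"
proof (rule Set.set_eqI)
  fix w show "w \<in> {w \<in> lists A. w \<noteq> [] \<and> last w = a} \<longleftrightarrow> w \<in> (if a \<in> A then conc (lists A) {[a]} else {})"
    by (cases w rule: rev_cases) (auto simp: conc_def)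
qed

lemma gsh_Hd: "gsh A h {w \<in> lists A. w \<noteq> [] \<and> hd w = a}"
  unfolding Hd_expr by (auto intro: gsh_conc gsh_letter gsh_lists gsh_empty)

lemma gsh_Last: "gsh A h {w \<in> lists A. w \<noteq> [] \<and> last w = a}"
  unfolding Last_expr by (auto intro: gsh_conc gsh_letter gsh_lists gsh_empty)

definition sig :: "nat \<Rightarrow> 'a set \<Rightarrow> 'a list \<Rightarrow> 'a \<times> 'a \<times> ('a \<times> 'a \<Rightarrow> nat) \<times> ('a \<times> 'a) set" where
  "sig N A w = (hd w, last w, restrict (\<lambda>p. cnt (fst p) (snd p) w mod N) (A \<times> A),
     {p \<in> A \<times> A. 0 < cnt (fst p) (snd p) w})"

lemma sig_eq_iff: "sig N A w = sig N A w0 \<longleftrightarrow> hd w = hd w0 \<and> last w = last w0 \<and>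
   (\<forall>p\<in>A \<times> A. cnt (fst p) (snd p) w mod N = cnt (fst p) (snd p) w0 mod N \<and>
      (0 < cnt (fst p) (snd p) w \<longleftrightarrow> 0 < cnt (fst p) (snd p) w0))"
  unfolding sig_def by (auto simp: fun_eq_iff restrict_def set_eq_iff split: if_splits)

lemma gsh_fibre: assumes "finite A" "0 < N"
  shows "gsh A 1 {w \<in> lists A. w \<noteq> [] \<and> sig N A w = sig N A w0}"
proof -
  let ?F = "\<lambda>p. {w \<in> lists A. cnt (fst p) (snd p) w mod N = cnt (fst p) (snd p) w0 mod N \<and>
      (0 < cnt (fst p) (snd p) w \<longleftrightarrow> 0 < cnt (fst p) (snd p) w0)}"
  have "{w \<in> lists A. w \<noteq> [] \<and> sig N A w = sig N A w0} =
     {w \<in> lists A. w \<noteq> [] \<and> hd w = hd w0} \<inter> {w \<in> lists A. w \<noteq> [] \<and> last w = last w0} \<inter>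
     (lists A \<inter> (\<Inter>p\<in>A \<times> A. ?F p))"
    unfolding sig_eq_iff by auto
  moreover have "gsh A 1 (lists A \<inter> (\<Inter>p\<in>A \<times> A. ?F p))"
  proof (rule gsh_Inter)
    show "finite (A \<times> A)" using assms by simp
    fix p assume p: "p \<in> A \<times> A"
    have C: "gsh A 1 {w \<in> lists A. cnt (fst p) (snd p) w mod N = cnt (fst p) (snd p) w0 mod N}"
      using p assms by (intro gsh_C) auto
    have Pp: "gsh A 1 {w \<in> lists A. 0 < cnt (fst p) (snd p) w}"
      using p by (intro gsh_Pos) auto
    show "gsh A 1 (?F p)"
    proof (cases "0 < cnt (fst p) (snd p) w0")
      case True
      then have "?F p = {w \<in> lists A. cnt (fst p) (snd p) w mod N = cnt (fst p) (snd p) w0 mod N}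
          \<inter> {w \<in> lists A. 0 < cnt (fst p) (snd p) w}" by auto
      then show ?thesis using C Pp by (simp add: gsh_int)
    next
      case False
      then have "?F p = {w \<in> lists A. cnt (fst p) (snd p) w mod N = cnt (fst p) (snd p) w0 mod N}
          \<inter> (lists A - {w \<in> lists A. 0 < cnt (fst p) (snd p) w})" by auto
      then show ?thesis using C Pp by (simp add: gsh_int gsh_compl)
    qed
  qed
  ultimately show ?thesis by (simp add: gsh_int gsh_Hd gsh_Last)
qed



lemma pow_mod_order:
  assumes "group G" "x \<in> carrier G" shows "x [^]\<^bsub>G\<^esub> (k::nat) = x [^]\<^bsub>G\<^esub> (k mod order G)"
proof -
  interpret group G by fact
  have "x [^]\<^bsub>G\<^esub> k = x [^]\<^bsub>G\<^esub> (order G * (k div order G) + k mod order G)"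
    by (metis mult_div_mod_eq)
  also have "\<dots> = (x [^]\<^bsub>G\<^esub> order G) [^]\<^bsub>G\<^esub> (k div order G) \<otimes>\<^bsub>G\<^esub> x [^]\<^bsub>G\<^esub> (k mod order G)"
    using assms(2) by (simp add: nat_pow_mult nat_pow_pow)
  also have "\<dots> = x [^]\<^bsub>G\<^esub> (k mod order G)"
    using assms(2) by (simp add: pow_order_eq_1)
  finally show ?thesis .
qed

lemma finprod_bump:
  assumes "comm_monoid G" "finite S" "p0 \<in> S" "q \<in> S \<rightarrow> carrier G"
  shows "finprod G (\<lambda>p. q p [^]\<^bsub>G\<^esub> (c p + (if p = p0 then 1 else 0 :: nat))) S
       = finprod G (\<lambda>p. q p [^]\<^bsub>G\<^esub> c p) S \<otimes>\<^bsub>G\<^esub> q p0"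
proof -
  interpret comm_monoid G by fact
  have qc: "q p \<in> carrier G" if "p \<in> S" for p using assms(4) that by blast
  have "finprod G (\<lambda>p. q p [^]\<^bsub>G\<^esub> (c p + (if p = p0 then 1 else 0 :: nat))) S
     = finprod G (\<lambda>p. q p [^]\<^bsub>G\<^esub> c p \<otimes>\<^bsub>G\<^esub> (if p0 = p then q p else \<one>\<^bsub>G\<^esub>)) S"
    by (rule finprod_cong') (auto simp: qc)
  also have "\<dots> = finprod G (\<lambda>p. q p [^]\<^bsub>G\<^esub> c p) S \<otimes>\<^bsub>G\<^esub> finprod G (\<lambda>p. if p0 = p then q p else \<one>\<^bsub>G\<^esub>) S"
    by (rule finprod_multf) (auto simp: qc)
  also have "finprod G (\<lambda>p. if p0 = p then q p else \<one>\<^bsub>G\<^esub>) S = q p0"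
    by (rule finprod_singleton) (use assms in auto)
  finally show ?thesis .
qed

lemma rees0_sig:
  fixes G :: "('g,'b) monoid_scheme" and P :: "'l \<Rightarrow> 'i \<Rightarrow> 'g option"
    and psi :: "'a list \<Rightarrow> ('i \<times> 'g \<times> 'l) option"
  assumes grp: "comm_group G"
    and Pc: "\<forall>l\<in>Lam. \<forall>i\<in>I. \<forall>g. P l i = Some g \<longrightarrow> g \<in> carrier G"
    and car: "\<forall>w. w \<in> lists A \<and> w \<noteq> [] \<longrightarrow> psi w \<in> rees0_carrier G I Lam"
    and hom: "\<forall>u v. u \<in> lists A \<and> u \<noteq> [] \<and> v \<in> lists A \<and> v \<noteq> [] \<longrightarrow>
               psi (u @ v) = rees0_mult G P (psi u) (psi v)"
    and fin: "finite A"
  shows "\<exists>F. \<forall>w. w \<in> lists A \<and> w \<noteq> [] \<longrightarrow> psi w = F (sig (order G) A w)"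
proof -
  interpret comm_group G by (rule grp)
  define ii where "ii x = fst (the (psi [x]))" for x
  define ga where "ga x = fst (snd (the (psi [x])))" for x
  define la where "la x = snd (snd (the (psi [x])))" for x
  have letter: "psi [y] = None \<or> (psi [y] = Some (ii y, ga y, la y) \<and> ii y \<in> I \<and> ga y \<in> carrier G \<and> la y \<in> Lam)"
    if "y \<in> A" for y
    using car[rule_format, of "[y]"] that by (auto simp: rees0_carrier_def ii_def ga_def la_def)
  define q where "q p = (if psi [fst p] \<noteq> None \<and> psi [snd p] \<noteq> None then
      (case P (la (fst p)) (ii (snd p)) of Some g \<Rightarrow> g \<otimes>\<^bsub>G\<^esub> ga (snd p) | None \<Rightarrow> \<one>\<^bsub>G\<^esub>) else \<one>\<^bsub>G\<^esub>)" for p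
  have qc: "q \<in> A \<times> A \<rightarrow> carrier G"
  proof
    fix p assume p: "p \<in> A \<times> A"
    show "q p \<in> carrier G"
    proof (cases "psi [fst p] \<noteq> None \<and> psi [snd p] \<noteq> None")
      case True
      then have "la (fst p) \<in> Lam" "ii (snd p) \<in> I" "ga (snd p) \<in> carrier G"
        using letter[of "fst p"] letter[of "snd p"] p by auto
      then show ?thesis using True Pc unfolding q_def by (auto split: option.split)
    next
      case False
      then have "q p = \<one>\<^bsub>G\<^esub>" unfolding q_def by (rule if_not_P)
      then show ?thesis by simp
    qed
  qed
  define bad where "bad w \<longleftrightarrow> psi [hd w] = None \<or> (\<exists>p\<in>A \<times> A. 0 < cnt (fst p) (snd p) w \<and>
      (psi [snd p] = None \<or> P (la (fst p)) (ii (snd p)) = None))" for w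
  define F0 where "F0 w = (if bad w then None else Some (ii (hd w),
      ga (hd w) \<otimes>\<^bsub>G\<^esub> finprod G (\<lambda>p. q p [^]\<^bsub>G\<^esub> cnt (fst p) (snd p) w) (A \<times> A), la (last w)))" for w
  have main: "psi w = F0 w" if "w \<in> lists A" "w \<noteq> []" for w
    using that
  proof (induction w rule: rev_induct)
    case Nil then show ?case by simp
  next
    case (snoc y w)
    have y: "y \<in> A" and wA: "w \<in> lists A" using snoc.prems by auto
    show ?case
    proof (cases "w = []")
      case True
      have bady: "bad [y] \<longleftrightarrow> psi [y] = None" by (simp add: bad_def)
      from letter[OF y] show ?thesis
      proof
        assume "psi [y] = None" then show ?thesis using True bady by (simp add: F0_def)
      next
        assume h: "psi [y] = Some (ii y, ga y, la y) \<and> ii y \<in> I \<and> ga y \<in> carrier G \<and> la y \<in> Lam"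
        then show ?thesis using True bady by (simp add: F0_def)
      qed
    next
      case False
      have IH: "psi w = F0 w" using snoc.IH wA False by blast
      have psiwy: "psi (w @ [y]) = rees0_mult G P (psi w) (psi [y])"
        using hom wA y False by auto
      have lw: "last w \<in> A" using wA False by auto
      have hw: "hd w \<in> A" using wA False by auto
      have cs: "cnt x z (w @ [y]) = cnt x z w + (if x = last w \<and> z = y then 1 else 0)" for x z
        using cnt_append[OF False, of x z "[y]"] by simp
      define Q where "Q p \<longleftrightarrow> psi [snd p] = None \<or> P (la (fst p)) (ii (snd p)) = None" for p :: "'a \<times> 'a"
      have bQ: "bad u \<longleftrightarrow> psi [hd u] = None \<or> (\<exists>p\<in>A \<times> A. 0 < cnt (fst p) (snd p) u \<and> Q p)" for u
        by (simp add: bad_def Q_def)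
      have ex: "(\<exists>p\<in>A \<times> A. 0 < cnt (fst p) (snd p) (w @ [y]) \<and> Q p) \<longleftrightarrow>
          (\<exists>p\<in>A \<times> A. 0 < cnt (fst p) (snd p) w \<and> Q p) \<or> Q (last w, y)"
      proof
        assume "\<exists>p\<in>A \<times> A. 0 < cnt (fst p) (snd p) (w @ [y]) \<and> Q p"
        then obtain p where p: "p \<in> A \<times> A" "0 < cnt (fst p) (snd p) (w @ [y])" "Q p" by blast
        show "(\<exists>p\<in>A \<times> A. 0 < cnt (fst p) (snd p) w \<and> Q p) \<or> Q (last w, y)"
        proof (cases "p = (last w, y)")
          case True then show ?thesis using p by simp
        next
          case False
          then have "\<not> (fst p = last w \<and> snd p = y)" by (cases p) auto
          then have "cnt (fst p) (snd p) (w @ [y]) = cnt (fst p) (snd p) w" using cs by simp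
          then have "0 < cnt (fst p) (snd p) w" using p by simp
          then have "\<exists>p\<in>A \<times> A. 0 < cnt (fst p) (snd p) w \<and> Q p" using p by blast
          then show ?thesis by blast
        qed
      next
        assume "(\<exists>p\<in>A \<times> A. 0 < cnt (fst p) (snd p) w \<and> Q p) \<or> Q (last w, y)"
        then show "\<exists>p\<in>A \<times> A. 0 < cnt (fst p) (snd p) (w @ [y]) \<and> Q p"
        proof
          assume "\<exists>p\<in>A \<times> A. 0 < cnt (fst p) (snd p) w \<and> Q p"
          then obtain p where p: "p \<in> A \<times> A" "0 < cnt (fst p) (snd p) w" "Q p" by blast
          have "cnt (fst p) (snd p) w \<le> cnt (fst p) (snd p) (w @ [y])" using cs by simp
          then show ?thesis using p by (intro bexI[of _ p]) auto
        next
          assume q: "Q (last w, y)"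
          have "cnt (last w) y (w @ [y]) = cnt (last w) y w + 1" using cs by simp
          then show ?thesis using q lw y by (intro bexI[of _ "(last w, y)"]) auto
        qed
      qed
      have badeq: "bad (w @ [y]) \<longleftrightarrow> bad w \<or> psi [y] = None \<or> P (la (last w)) (ii y) = None"
        unfolding bQ ex using False by (simp add: Q_def)
      show ?thesis
      proof (cases "bad w")
        case True
        then show ?thesis using IH psiwy badeq by (simp add: F0_def rees0_mult_def)
      next
        case nb: False
        have hnn: "psi [hd w] \<noteq> None" using nb by (simp add: bad_def)
        have lnn: "psi [last w] \<noteq> None"
        proof -
          have "last w \<in> set w" using False by simp
          then have "last w = hd w \<or> (\<exists>x. 0 < cnt x (last w) w)" by (rule mem_cnt)
          then show ?thesis
          proof
            assume "\<exists>x. 0 < cnt x (last w) w"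
            then obtain x where x: "0 < cnt x (last w) w" by blast
            then have "x \<in> A" using cnt_pos_set[OF x] wA by auto
            then have xl: "(x, last w) \<in> A \<times> A" using lw by simp
            have "\<not> (0 < cnt (fst (x, last w)) (snd (x, last w)) w \<and>
                (psi [snd (x, last w)] = None \<or> P (la (fst (x, last w))) (ii (snd (x, last w))) = None))"
              using nb xl unfolding bad_def by blast
            then show ?thesis using x by simp
          qed (use hnn in simp)
        qed
        have gh: "ga (hd w) \<in> carrier G" "psi [hd w] = Some (ii (hd w), ga (hd w), la (hd w))"
          using letter[OF hw] hnn by auto
        have gl: "la (last w) \<in> Lam" using letter[OF lw] lnn by auto
        let ?S = "finprod G (\<lambda>p. q p [^]\<^bsub>G\<^esub> cnt (fst p) (snd p) w) (A \<times> A)"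
        have Sc: "?S \<in> carrier G" using qc by (auto intro!: finprod_closed)
        have pw: "psi w = Some (ii (hd w), ga (hd w) \<otimes>\<^bsub>G\<^esub> ?S, la (last w))"
          using IH nb by (simp add: F0_def)
        from letter[OF y] show ?thesis
        proof
          assume "psi [y] = None"
          then show ?thesis using psiwy pw badeq by (simp add: F0_def rees0_mult_def)
        next
          assume hy: "psi [y] = Some (ii y, ga y, la y) \<and> ii y \<in> I \<and> ga y \<in> carrier G \<and> la y \<in> Lam"
          show ?thesis
          proof (cases "P (la (last w)) (ii y)")
            case None
            then show ?thesis using psiwy pw badeq hy by (simp add: F0_def rees0_mult_def)
          next
            case (Some g)
            have gc: "g \<in> carrier G" using Pc gl hy Some by blast
            have nb': "\<not> bad (w @ [y])" using badeq nb hy Some by simp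
            have qlw: "q (last w, y) = g \<otimes>\<^bsub>G\<^esub> ga y" using lnn hy Some by (simp add: q_def)
            have fe: "(\<lambda>p. q p [^]\<^bsub>G\<^esub> cnt (fst p) (snd p) (w @ [y]))
               = (\<lambda>p. q p [^]\<^bsub>G\<^esub> (cnt (fst p) (snd p) w + (if p = (last w, y) then 1 else 0)))"
              by (auto simp: cs fun_eq_iff)
            have prod: "finprod G (\<lambda>p. q p [^]\<^bsub>G\<^esub> cnt (fst p) (snd p) (w @ [y])) (A \<times> A)
                = ?S \<otimes>\<^bsub>G\<^esub> (g \<otimes>\<^bsub>G\<^esub> ga y)"
              unfolding fe using finprod_bump[OF comm_monoid_axioms _ _ qc, of "(last w, y)"
                  "\<lambda>p. cnt (fst p) (snd p) w"] fin lw y qlw by simp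
            have "psi (w @ [y]) = Some (ii (hd w), ga (hd w) \<otimes>\<^bsub>G\<^esub> ?S \<otimes>\<^bsub>G\<^esub> g \<otimes>\<^bsub>G\<^esub> ga y, la y)"
              using psiwy pw hy Some by (simp add: rees0_mult_def)
            also have "\<dots> = F0 (w @ [y])"
              using nb' prod gh gc hy Sc False by (simp add: F0_def m_assoc)
            finally show ?thesis .
          qed
        qed
      qed
    qed
  qed
  have inv: "F0 u = F0 v" if "u \<in> lists A" "u \<noteq> []" "v \<in> lists A" "v \<noteq> []"
    "sig (order G) A u = sig (order G) A v" for u v
  proof -
    from that(5) have e: "hd u = hd v" "last u = last v"
      "\<forall>p\<in>A \<times> A. cnt (fst p) (snd p) u mod order G = cnt (fst p) (snd p) v mod order G \<and>
        (0 < cnt (fst p) (snd p) u \<longleftrightarrow> 0 < cnt (fst p) (snd p) v)"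
      unfolding sig_eq_iff by auto
    have "bad u = bad v" unfolding bad_def using e by auto
    moreover have "finprod G (\<lambda>p. q p [^]\<^bsub>G\<^esub> cnt (fst p) (snd p) u) (A \<times> A)
        = finprod G (\<lambda>p. q p [^]\<^bsub>G\<^esub> cnt (fst p) (snd p) v) (A \<times> A)"
    proof (rule finprod_cong')
      show "(\<lambda>p. q p [^]\<^bsub>G\<^esub> cnt (fst p) (snd p) v) \<in> A \<times> A \<rightarrow> carrier G" using qc by auto
      fix p assume p: "p \<in> A \<times> A"
      have "q p [^]\<^bsub>G\<^esub> cnt (fst p) (snd p) u = q p [^]\<^bsub>G\<^esub> (cnt (fst p) (snd p) u mod order G)"
        by (rule pow_mod_order[OF is_group]) (use qc p in auto)
      also have "\<dots> = q p [^]\<^bsub>G\<^esub> (cnt (fst p) (snd p) v mod order G)" using e p by (cases p) auto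
      also have "\<dots> = q p [^]\<^bsub>G\<^esub> cnt (fst p) (snd p) v"
        by (rule pow_mod_order[OF is_group, symmetric]) (use qc p in auto)
      finally show "q p [^]\<^bsub>G\<^esub> cnt (fst p) (snd p) u = q p [^]\<^bsub>G\<^esub> cnt (fst p) (snd p) v" .
    qed simp
    ultimately show ?thesis unfolding F0_def using e by simp
  qed
  define F where "F \<sigma> = F0 (SOME w. w \<in> lists A \<and> w \<noteq> [] \<and> sig (order G) A w = \<sigma>)" for \<sigma>
  have "psi w = F (sig (order G) A w)" if "w \<in> lists A" "w \<noteq> []" for w
  proof -
    let ?w = "SOME w'. w' \<in> lists A \<and> w' \<noteq> [] \<and> sig (order G) A w' = sig (order G) A w"
    have ex: "\<exists>w'. w' \<in> lists A \<and> w' \<noteq> [] \<and> sig (order G) A w' = sig (order G) A w"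
      using that by blast
    have h: "?w \<in> lists A \<and> ?w \<noteq> [] \<and> sig (order G) A ?w = sig (order G) A w"
      by (rule someI_ex[OF ex])
    have "F0 w = F0 ?w" using h by (intro inv that) auto
    then show ?thesis unfolding F_def using main[OF that] by simp
  qed
  then show ?thesis by blast
qed


theorem theorem3p6:
  fixes G :: "('g, 'b) monoid_scheme"
    and I :: "'i set" and Lam :: "'l set"
    and A :: "'a set" and L :: "'a list set"
  assumes "comm_group G" and "finite (carrier G)"
    and "I \<noteq> {}" and "Lam \<noteq> {}"
    and "finite A"
  shows "(\<forall>P :: 'l \<Rightarrow> 'i \<Rightarrow> 'g option.
            (\<forall>l\<in>Lam. \<forall>i\<in>I. \<forall>g. P l i = Some g \<longrightarrow> g \<in> carrier G) \<longrightarrow>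
            recognises (rees0_carrier G I Lam) (rees0_mult G P) A L \<longrightarrow>
            gen_star_height_le A L 1)
       \<and> (\<forall>P :: 'l \<Rightarrow> 'i \<Rightarrow> 'g.
            (\<forall>l\<in>Lam. \<forall>i\<in>I. P l i \<in> carrier G) \<longrightarrow>
            recognises (rees_carrier G I Lam) (rees_mult G P) A L \<longrightarrow>
            gen_star_height_le A L 1)"
proof -
  have N0: "0 < order G"
    using assms(1,2) monoid.order_gt_0_iff_finite[of G] by (simp add: comm_group_def comm_monoid_def)
  have zero: "gen_star_height_le A L 1"
    if Pc: "\<forall>l\<in>Lam. \<forall>i\<in>I. \<forall>g. P l i = Some g \<longrightarrow> g \<in> carrier G"
      and rec: "recognises (rees0_carrier G I Lam) (rees0_mult G P) A L" for P :: "'l \<Rightarrow> 'i \<Rightarrow> 'g option"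
  proof -
    obtain psi X where car: "\<forall>w. w \<in> lists A \<and> w \<noteq> [] \<longrightarrow> psi w \<in> rees0_carrier G I Lam"
      and hom: "\<forall>u v. u \<in> lists A \<and> u \<noteq> [] \<and> v \<in> lists A \<and> v \<noteq> [] \<longrightarrow>
               psi (u @ v) = rees0_mult G P (psi u) (psi v)"
      and Ld: "L = {w \<in> lists A. w \<noteq> [] \<and> psi w \<in> X}"
      using rec unfolding recognises_def by blast
    obtain F where F: "\<forall>w. w \<in> lists A \<and> w \<noteq> [] \<longrightarrow> psi w = F (sig (order G) A w)"
      using rees0_sig[OF assms(1) Pc car hom assms(5)] by blast
    let ?s = "sig (order G) A"
    have Leq: "L = (\<Union>\<sigma>\<in>?s ` L. {w \<in> lists A. w \<noteq> [] \<and> ?s w = \<sigma>})"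
    proof (rule Set.set_eqI, rule iffI)
      fix w assume "w \<in> L" then show "w \<in> (\<Union>\<sigma>\<in>?s ` L. {w \<in> lists A. w \<noteq> [] \<and> ?s w = \<sigma>})"
        using Ld by blast
    next
      fix w assume "w \<in> (\<Union>\<sigma>\<in>?s ` L. {w \<in> lists A. w \<noteq> [] \<and> ?s w = \<sigma>})"
      then obtain w0 where w0: "w0 \<in> L" and w: "w \<in> lists A" "w \<noteq> []" "?s w = ?s w0" by blast
      have "w0 \<in> lists A" "w0 \<noteq> []" "psi w0 \<in> X" using w0 Ld by auto
      then have "psi w \<in> X" using F w by metis
      then show "w \<in> L" using Ld w by blast
    qed
    have fin: "finite (?s ` L)"
    proof (rule finite_subset)
      show "?s ` L \<subseteq> A \<times> A \<times> (PiE (A \<times> A) (\<lambda>_. {..<order G})) \<times> Pow (A \<times> A)"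
      proof
        fix x assume "x \<in> ?s ` L"
        then obtain w where w: "w \<in> L" "x = ?s w" by blast
        then have "w \<in> lists A" "w \<noteq> []" using Ld by auto
        then show "x \<in> A \<times> A \<times> (PiE (A \<times> A) (\<lambda>_. {..<order G})) \<times> Pow (A \<times> A)"
          using w(2) N0 by (auto simp: sig_def restrict_PiE_iff)
      qed
      show "finite (A \<times> A \<times> (PiE (A \<times> A) (\<lambda>_. {..<order G})) \<times> Pow (A \<times> A))"
        using assms(5) by (intro finite_cartesian_product finite_PiE) auto
    qed
    have "gen_star_height_le A (\<Union>\<sigma>\<in>?s ` L. {w \<in> lists A. w \<noteq> [] \<and> ?s w = \<sigma>}) 1"
    proof (rule gsh_Union[OF fin])
      fix \<sigma> assume "\<sigma> \<in> ?s ` L"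
      then obtain w0 where "\<sigma> = ?s w0" by blast
      then show "gen_star_height_le A {w \<in> lists A. w \<noteq> [] \<and> ?s w = \<sigma>} 1"
        using gsh_fibre[OF assms(5) N0, of w0] by simp
    qed
    then show ?thesis using Leq by simp
  qed
  have nz: "gen_star_height_le A L 1"
    if Pc: "\<forall>l\<in>Lam. \<forall>i\<in>I. P l i \<in> carrier G"
      and rec: "recognises (rees_carrier G I Lam) (rees_mult G P) A L" for P :: "'l \<Rightarrow> 'i \<Rightarrow> 'g"
  proof -
    obtain psi X where car: "\<forall>w. w \<in> lists A \<and> w \<noteq> [] \<longrightarrow> psi w \<in> rees_carrier G I Lam"
      and hom: "\<forall>u v. u \<in> lists A \<and> u \<noteq> [] \<and> v \<in> lists A \<and> v \<noteq> [] \<longrightarrow>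
               psi (u @ v) = rees_mult G P (psi u) (psi v)"
      and Xs: "X \<subseteq> rees_carrier G I Lam"
      and Ld: "L = {w \<in> lists A. w \<noteq> [] \<and> psi w \<in> X}"
      using rec unfolding recognises_def by blast
    have m: "rees0_mult G (\<lambda>l i. Some (P l i)) (Some x) (Some y) = Some (rees_mult G P x y)" for x y
      by (cases x; cases y) (simp add: rees0_mult_def rees_mult_def)
    have "recognises (rees0_carrier G I Lam) (rees0_mult G (\<lambda>l i. Some (P l i))) A L"
      unfolding recognises_def
    proof (intro exI[of _ "\<lambda>w. Some (psi w)"] exI[of _ "Some ` X"] conjI allI impI)
      fix w assume "w \<in> lists A \<and> w \<noteq> []"
      then show "Some (psi w) \<in> rees0_carrier G I Lam"
        using car by (auto simp: rees0_carrier_def rees_carrier_def)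
    next
      fix u v assume "u \<in> lists A \<and> u \<noteq> [] \<and> v \<in> lists A \<and> v \<noteq> []"
      then show "Some (psi (u @ v)) = rees0_mult G (\<lambda>l i. Some (P l i)) (Some (psi u)) (Some (psi v))"
        using hom m by simp
    next
      show "Some ` X \<subseteq> rees0_carrier G I Lam" using Xs by (auto simp: rees0_carrier_def rees_carrier_def)
    next
      show "L = {w \<in> lists A. w \<noteq> [] \<and> Some (psi w) \<in> Some ` X}" using Ld by auto
    qed
    then show ?thesis using zero[of "\<lambda>l i. Some (P l i)"] Pc by auto
  qed
  show ?thesis using zero nz by blast
qed

end
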